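(* Let $S=\frac1n\sum_{i=1}^n\mathbf x_i\mathbf x_i^\top$ and let $k,k'\ge0$ be integers. Then there are real numbers $\alpha_1,\dots,\alpha_5$ (depending on $n,d,k,k'$) such that $$\mathbb E\big[S\mathbf u_s\mathbf u_s^\top S^k\mathbf u_t\mathbf u_t^\top S^{k'}\big]=\alpha_1\mathbf u_s\mathbf u_s^\top+\alpha_2\mathbf u_t\mathbf u_t^\top+\alpha_3I\quad\text{for any }s\neq t,$$ $$\mathbb E\big[S\mathbf u_s\mathbf u_s^\top S^k\mathbf u_s\mathbf u_s^\top S^{k'}\big]=\alpha_4\mathbf u_s\mathbf u_s^\top+\alpha_5I\quad\text{for any } s.$$
   Context: $\mathbf x_1,\dots,\mathbf x_n$ are i.i.d. $\mathcal N(0,I_d)$. $\{\mathbf u_s\}_{s=1}^d$ is an orthonormal basis of $\mathbb R^d$. *)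

theory Defs
  imports "HOL-Analysis.Analysis" "HOL-Probability.Probability"
begin

definition outer :: "real^'d \<Rightarrow> real^'d \<Rightarrow> real^'d^'d" where
  "outer u v = (\<chi> i j. u $ i * v $ j)"

definition mpow :: "real^'d^'d \<Rightarrow> nat \<Rightarrow> real^'d^'d" where
  "mpow A k = (((**) A) ^^ k) (mat 1)"

text \<open>Joint law of n i.i.d. N(0, I_d) vectors x_0,...,x_{n-1}: all n*d coordinates
  (i,j) are i.i.d. standard normal real variables.\<close>
definition gauss_sample :: "nat \<Rightarrow> ((nat \<times> 'd::finite) \<Rightarrow> real) measure" where
  "gauss_sample n = PiM ({..<n} \<times> UNIV) (\<lambda>_. density lborel std_normal_density)"

definition xvec :: "((nat \<times> 'd::finite) \<Rightarrow> real) \<Rightarrow> nat \<Rightarrow> real^'d" where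
  "xvec \<omega> i = (\<chi> j. \<omega> (i, j))"

definition sample_cov :: "nat \<Rightarrow> ((nat \<times> 'd::finite) \<Rightarrow> real) \<Rightarrow> real^'d^'d" where
  "sample_cov n \<omega> = (1 / real n) *\<^sub>R (\<Sum>i<n. outer (xvec \<omega> i) (xvec \<omega> i))"

end

theory Submission
  imports Defs "HOL-Library.Countable"
begin

declare transpose_matrix_vector[simp del]

lemma orth_pre:
  fixes Q :: "real^'m::finite^'m"
  assumes "orthogonal_matrix Q"
  shows "(\<lambda>x. Q *v x) -` S = (\<lambda>x. transpose Q *v x) ` S"
proof -
  have 1: "transpose Q ** Q = mat 1" "Q ** transpose Q = mat 1" using assms by (auto simp: orthogonal_matrix_def)
  show ?thesis
  proof (intro set_eqI iffI)
    fix x assume "x \<in> (\<lambda>x. Q *v x) -` S"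
    then have "Q *v x \<in> S" by simp
    moreover have "x = transpose Q *v (Q *v x)" by (simp add: matrix_vector_mul_assoc 1)
    ultimately show "x \<in> (\<lambda>x. transpose Q *v x) ` S" by blast
  next
    fix x assume "x \<in> (\<lambda>x. transpose Q *v x) ` S"
    then obtain y where "y \<in> S" "x = transpose Q *v y" by blast
    then show "x \<in> (\<lambda>x. Q *v x) -` S" by (simp add: matrix_vector_mul_assoc 1)
  qed
qed

lemma mv_cont: "isCont (\<lambda>x. (Q::real^'n::finite^'m::finite) *v x) x"
  by (simp add: linear_continuous_at matrix_vector_mul_linear)

lemma mv_meas[measurable]: "(\<lambda>x. (Q::real^'n::finite^'m::finite) *v x) \<in> borel_measurable borel"
  by (intro borel_measurable_continuous_onI continuous_at_imp_continuous_on) (auto simp: mv_cont)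

lemma lborel_orth_inv:
  fixes Q :: "(real^'m::{finite,wellorder})^'m::_"
  assumes Q: "orthogonal_matrix Q"
  shows "distr lborel borel (\<lambda>x. Q *v x) = lborel"
proof (rule lborel_eqI[symmetric])
  show "sets (distr lborel borel (\<lambda>x. Q *v x)) = sets borel" by simp
  fix l u :: "real^'m::_" assume le: "\<And>b. b\<in>Basis \<Longrightarrow> l\<bullet>b \<le> u\<bullet>b"
  let ?g = "\<lambda>x. transpose Q *v x"
  have QT: "orthogonal_matrix (transpose Q)" using Q by (simp add: orthogonal_matrix_transpose)
  have ot: "orthogonal_transformation ?g"
    using QT by (simp add: orthogonal_transformation_matrix)
  have bl: "box l u \<in> lmeasurable" by simp
  have eqg: "?g ` box l u = (\<lambda>x. Q *v x) -` box l u" using orth_pre[OF Q] by simp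
  have "isCont (\<lambda>x. Q *v x) x" for x
    by (simp add: linear_continuous_at matrix_vector_mul_linear)
  then have open_im: "open (?g ` box l u)"
    unfolding eqg by (intro continuous_open_vimage) auto
  have "emeasure (distr lborel borel (\<lambda>x. Q *v x)) (box l u) = emeasure lborel (?g ` box l u)"
    by (subst emeasure_distr) (auto simp: orth_pre[OF Q])
  also have "\<dots> = emeasure lebesgue (?g ` box l u)"
    using open_im by simp
  also have "\<dots> = ennreal (measure lebesgue (?g ` box l u))"
    using measurable_orthogonal_image[OF ot bl] by (simp add: emeasure_eq_measure2)
  also have "\<dots> = ennreal (measure lebesgue (box l u))"
    by (simp add: measure_orthogonal_image[OF ot bl])
  also have "\<dots> = emeasure lborel (box l u)"
    by (simp add: emeasure_eq_measure2)
  also have "\<dots> = (\<Prod>b\<in>Basis. (u - l) \<bullet> b)"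
    using le by (simp add: emeasure_lborel_box_eq)
  finally show "emeasure (distr lborel borel (\<lambda>x. Q *v x)) (box l u) = (\<Prod>b\<in>Basis. (u - l) \<bullet> b)" .
qed

abbreviation "NG \<equiv> density lborel std_normal_density"

definition gdens :: "real^'m::finite \<Rightarrow> real" where
  "gdens x = (\<Prod>i\<in>UNIV. std_normal_density (x $ i))"

lemma sets_NG[simp, measurable_cong]: "sets NG = sets borel" by simp

lemma vn_meas[measurable]: "(\<lambda>x::real^'m::finite. \<lambda>i. x $ i) \<in> borel \<rightarrow>\<^sub>M PiM UNIV (\<lambda>_. NG)"
  by (rule measurable_PiM_single') (auto simp: space_PiM)

lemma Basis_vec_real: "(Basis :: (real^'m::finite) set) = range (\<lambda>i. axis i 1)"
  by (auto simp: Basis_vec_def)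

lemma prod_Basis_vec: "(\<Prod>b\<in>(Basis :: (real^'m::finite) set). f b) = (\<Prod>i\<in>UNIV. f (axis i 1))"
  unfolding Basis_vec_real
  by (subst prod.reindex) (auto simp: inj_on_def axis_eq_axis)

lemma gdens_meas[measurable]: "gdens \<in> borel_measurable borel"
  unfolding gdens_def by measurable

lemma gauss_vec:
  "PiM UNIV (\<lambda>_::'m::finite. NG) = distr (density lborel (\<lambda>x::real^'m. ennreal (gdens x))) (PiM UNIV (\<lambda>_. NG)) (\<lambda>x i. x $ i)"
proof -
  interpret NG: prob_space NG by (rule prob_space_normal_density) simp
  interpret P: product_sigma_finite "\<lambda>_::'m. NG"
    by (simp add: product_sigma_finite_def NG.sigma_finite_measure_axioms)
  show ?thesis
  proof (rule P.PiM_eqI[symmetric])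
    show "finite (UNIV :: 'm set)" by simp
    show "sets (distr (density lborel (\<lambda>x::real^'m. ennreal (gdens x))) (PiM UNIV (\<lambda>_. NG)) (\<lambda>x i. x $ i)) = sets (PiM UNIV (\<lambda>_. NG))"
      by simp
    fix A :: "'m \<Rightarrow> real set" assume A: "\<And>i. i \<in> UNIV \<Longrightarrow> A i \<in> sets NG"
    then have A'[measurable]: "\<And>i. A i \<in> sets borel" by simp
    have pre: "(($) :: real^'m \<Rightarrow> _) -` PiE UNIV A = {x. \<forall>i. x $ i \<in> A i}"
      by auto
    have mset[measurable]: "{x::real^'m. \<forall>i. x $ i \<in> A i} \<in> sets borel"
      by measurable
    have "emeasure (distr (density lborel (\<lambda>x::real^'m. ennreal (gdens x))) (PiM UNIV (\<lambda>_. NG)) (\<lambda>x i. x $ i)) (PiE UNIV A)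
        = emeasure (density lborel (\<lambda>x::real^'m. ennreal (gdens x))) {x. \<forall>i. x $ i \<in> A i}"
      by (subst emeasure_distr) (auto simp: pre intro!: sets_PiM_I_finite)
    also have "\<dots> = (\<integral>\<^sup>+ x. ennreal (gdens x) * indicator {x::real^'m. \<forall>i. x $ i \<in> A i} x \<partial>lborel)"
      by (subst emeasure_density) auto
    also have "\<dots> = (\<integral>\<^sup>+ (x::real^'m). (\<Prod>b\<in>Basis. ennreal (std_normal_density (x \<bullet> b) * indicator (A (axis_index b)) (x \<bullet> b))) \<partial>lborel)"
    proof (rule nn_integral_cong)
      fix x :: "real^'m"
      have "(\<Prod>b\<in>Basis. std_normal_density (x \<bullet> b) * indicator (A (axis_index b)) (x \<bullet> b))
          = (\<Prod>i\<in>UNIV. std_normal_density (x $ i) * indicator (A i) (x $ i))"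
        by (simp add: prod_Basis_vec inner_axis axis_index)
      also have "\<dots> = gdens x * indicator {x::real^'m. \<forall>i. x $ i \<in> A i} x"
        by (auto simp: gdens_def prod.distrib indicator_def)
      finally show "ennreal (gdens x) * indicator {x::real^'m. \<forall>i. x $ i \<in> A i} x = (\<Prod>b\<in>Basis. ennreal (std_normal_density (x \<bullet> b) * indicator (A (axis_index b)) (x \<bullet> b)))"
        by (subst prod_ennreal) (auto simp: ennreal_mult' indicator_def)
    qed
    also have "\<dots> = (\<Prod>b\<in>(Basis::(real^'m) set). (\<integral>\<^sup>+ t. ennreal (std_normal_density t * indicator (A (axis_index b)) t) \<partial>lborel))"
      by (rule nn_integral_lborel_prod[where f="\<lambda>b t. ennreal (std_normal_density t * indicator (A (axis_index b)) t)"]) auto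
    also have "\<dots> = (\<Prod>i\<in>UNIV. (\<integral>\<^sup>+ t. ennreal (std_normal_density t * indicator (A i) t) \<partial>lborel))"
      by (simp add: prod_Basis_vec axis_index)
    also have "\<dots> = (\<Prod>i\<in>UNIV. emeasure NG (A i))"
      by (intro prod.cong refl) (simp add: emeasure_density ennreal_mult' ennreal_indicator)
    finally show "emeasure (distr (density lborel (\<lambda>x::real^'m. ennreal (gdens x))) (PiM UNIV (\<lambda>_. NG)) (\<lambda>x i. x $ i)) (PiE UNIV A) = (\<Prod>i\<in>UNIV. emeasure NG (A i))" .
  qed
qed

lemma gdens_alt: "gdens (x::real^'m::finite) = (1/sqrt(2*pi))^CARD('m) * exp (-(x \<bullet> x)/2)"
proof -
  have "gdens x = (\<Prod>i\<in>UNIV. (1/sqrt(2*pi)) * exp (- ((x $ i)^2)/2))"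
    unfolding gdens_def std_normal_density_def by simp
  also have "\<dots> = (1/sqrt(2*pi))^CARD('m) * exp (\<Sum>i\<in>UNIV. - ((x $ i)^2)/2)"
    by (simp only: prod.distrib prod_constant) (simp add: exp_sum)
  also have "(\<Sum>i\<in>UNIV. - ((x $ i)^2)/2) = -(x \<bullet> x)/2"
    by (simp add: inner_vec_def sum_divide_distrib sum_negf power2_eq_square)
  finally show ?thesis .
qed

lemma orth_ot: "orthogonal_matrix (Q::real^'m::finite^'m) \<Longrightarrow> orthogonal_transformation (\<lambda>x. Q *v x)"
  by (simp add: orthogonal_transformation_matrix matrix_vector_mul_linear)

lemma gdens_orth: "orthogonal_matrix (Q::real^'m::finite^'m) \<Longrightarrow> gdens (Q *v x) = gdens x"
  using orth_ot[of Q] by (simp add: gdens_alt orthogonal_transformation_def)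

lemma G_orth_inv:
  fixes Q :: "(real^'m::{finite,wellorder})^'m::_"
  assumes Q: "orthogonal_matrix Q"
  shows "distr (density lborel (\<lambda>x::real^'m::_. ennreal (gdens x))) borel (\<lambda>x. Q *v x) = density lborel (\<lambda>x::real^'m::_. ennreal (gdens x))"
proof -
  have "density (distr lborel borel (\<lambda>x. Q *v x)) (\<lambda>x::real^'m::_. ennreal (gdens x))
      = distr (density lborel (\<lambda>x. ennreal (gdens (Q *v x)))) borel (\<lambda>x. Q *v x)"
    by (rule density_distr) auto
  then show ?thesis using gdens_orth[OF Q] lborel_orth_inv[OF Q] by simp
qed

definition rotf :: "real^'m::finite^'m \<Rightarrow> ('m \<Rightarrow> real) \<Rightarrow> ('m \<Rightarrow> real)" where
  "rotf Q \<omega> = (\<lambda>j. \<Sum>l\<in>UNIV. Q$j$l * \<omega> l)"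

lemma rotf_meas[measurable]: "rotf Q \<in> PiM UNIV (\<lambda>_. NG) \<rightarrow>\<^sub>M PiM UNIV (\<lambda>_. NG)"
  unfolding rotf_def by (rule measurable_PiM_single') (auto simp: space_PiM)

lemma rotf_vn: "rotf Q (\<lambda>i. x $ i) = (\<lambda>i. (Q *v x) $ i)"
  by (simp add: rotf_def matrix_vector_mult_def)

lemma gauss_orth_wo:
  fixes Q :: "(real^'m::{finite,wellorder})^'m::_"
  assumes Q: "orthogonal_matrix Q"
  shows "distr (PiM UNIV (\<lambda>_::'m::_. NG)) (PiM UNIV (\<lambda>_. NG)) (rotf Q) = PiM UNIV (\<lambda>_. NG)"
proof -
  let ?G = "density lborel (\<lambda>x::real^'m::_. ennreal (gdens x))"
  have "distr (PiM UNIV (\<lambda>_::'m::_. NG)) (PiM UNIV (\<lambda>_. NG)) (rotf Q)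
      = distr (distr ?G (PiM UNIV (\<lambda>_. NG)) (\<lambda>x i. x $ i)) (PiM UNIV (\<lambda>_. NG)) (rotf Q)"
    by (subst gauss_vec) simp
  also have "\<dots> = distr ?G (PiM UNIV (\<lambda>_. NG)) (\<lambda>x. rotf Q (\<lambda>i. x $ i))"
    by (subst distr_distr) (auto simp: comp_def)
  also have "\<dots> = distr ?G (PiM UNIV (\<lambda>_. NG)) (\<lambda>x. (\<lambda>i. (Q *v x) $ i))"
    by (simp add: rotf_vn)
  also have "\<dots> = distr (distr ?G borel (\<lambda>x. Q *v x)) (PiM UNIV (\<lambda>_. NG)) (\<lambda>x i. x $ i)"
    by (subst distr_distr) (auto simp: comp_def)
  also have "\<dots> = PiM UNIV (\<lambda>_. NG)"
    by (simp add: G_orth_inv[OF Q] gauss_vec[symmetric])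
  finally show ?thesis .
qed

typedef 'a wo = "UNIV :: 'a set" by simp

instantiation wo :: (finite) linorder
begin
definition less_eq_wo :: "'a wo \<Rightarrow> 'a wo \<Rightarrow> bool" where
  "less_eq_wo x y \<longleftrightarrow> to_nat (Rep_wo x) \<le> to_nat (Rep_wo y)"
definition less_wo :: "'a wo \<Rightarrow> 'a wo \<Rightarrow> bool" where
  "less_wo x y \<longleftrightarrow> to_nat (Rep_wo x) < to_nat (Rep_wo y)"
instance
  by standard (auto simp: less_eq_wo_def less_wo_def Rep_wo_inject[symmetric] dest: injD[OF inj_to_nat])
end

instance wo :: (finite) finite
proof
  have "(UNIV :: 'a wo set) = Abs_wo ` UNIV"
    by (metis Rep_wo_inverse UNIV_I image_eqI subsetI subset_antisym)
  then show "finite (UNIV :: 'a wo set)" by (metis finite_imageI finite)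
qed

instance wo :: (finite) wellorder
proof
  fix P :: "'a wo \<Rightarrow> bool" and a
  assume H: "\<And>x. (\<And>y. y < x \<Longrightarrow> P y) \<Longrightarrow> P x"
  show "P a"
    by (induct a rule: measure_induct_rule[where f="\<lambda>x. to_nat (Rep_wo x)"]) (rule H, auto simp: less_wo_def)
qed


lemma sum_wo: "(\<Sum>b\<in>UNIV. g (Rep_wo b)) = (\<Sum>l\<in>UNIV. g l)"
  by (rule sum.reindex_bij_witness[of _ Abs_wo Rep_wo]) (auto simp: Abs_wo_inverse Rep_wo_inverse)

definition Qwo :: "real^'d::finite^'d \<Rightarrow> real^('d wo)^('d wo)" where
  "Qwo Q = (\<chi> a b. Q $ Rep_wo a $ Rep_wo b)"

lemma Qwo_orth:
  assumes "orthogonal_matrix Q"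
  shows "orthogonal_matrix (Qwo Q)"
proof -
  have 1: "transpose Q ** Q = mat 1" "Q ** transpose Q = mat 1" using assms by (auto simp: orthogonal_matrix_def)
  have "transpose (Qwo Q) ** Qwo Q = mat 1"
  proof -
    { fix a b
      have "(transpose (Qwo Q) ** Qwo Q) $ a $ b = (\<Sum>c\<in>UNIV. Q $ Rep_wo c $ Rep_wo a * Q $ Rep_wo c $ Rep_wo b)"
        by (simp add: matrix_matrix_mult_def transpose_def Qwo_def)
      also have "\<dots> = (\<Sum>k\<in>UNIV. Q $ k $ Rep_wo a * Q $ k $ Rep_wo b)"
        by (rule sum_wo)
      also have "\<dots> = (transpose Q ** Q) $ Rep_wo a $ Rep_wo b"
        by (simp add: matrix_matrix_mult_def transpose_def)
      also have "\<dots> = mat 1 $ a $ b"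
        by (simp add: 1 mat_def Rep_wo_inject)
      finally have "(transpose (Qwo Q) ** Qwo Q) $ a $ b = mat 1 $ a $ b" . }
    then show ?thesis by (simp add: vec_eq_iff)
  qed
  then show ?thesis by (simp add: orthogonal_matrix)
qed

lemma rotf_wo: "rotf Q (\<lambda>n. \<omega> (Abs_wo n)) = (\<lambda>n. rotf (Qwo Q) \<omega> (Abs_wo n))"
proof
  fix j
  have "rotf (Qwo Q) \<omega> (Abs_wo j) = (\<Sum>b\<in>UNIV. Q $ j $ Rep_wo b * \<omega> (Abs_wo (Rep_wo b)))"
    by (simp add: rotf_def Qwo_def Abs_wo_inverse Rep_wo_inverse)
  also have "\<dots> = (\<Sum>l\<in>UNIV. Q $ j $ l * \<omega> (Abs_wo l))"
    by (rule sum_wo[where g="\<lambda>l. Q $ j $ l * \<omega> (Abs_wo l)"])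
  finally show "rotf Q (\<lambda>n. \<omega> (Abs_wo n)) j = rotf (Qwo Q) \<omega> (Abs_wo j)"
    by (simp add: rotf_def)
qed

lemma reindex_wo: "distr (PiM UNIV (\<lambda>_::'d::finite wo. NG)) (PiM UNIV (\<lambda>_::'d. NG)) (\<lambda>\<omega> n. \<omega> (Abs_wo n)) = PiM UNIV (\<lambda>_::'d. NG)"
  using distr_PiM_reindex[of UNIV "\<lambda>_::'d wo. NG" Abs_wo "UNIV::'d set"]
  by (simp add: prob_space_normal_density inj_on_def Abs_wo_inject restrict_def)

lemma gauss_orth:
  fixes Q :: "real^'d::finite^'d"
  assumes Q: "orthogonal_matrix Q"
  shows "distr (PiM UNIV (\<lambda>_::'d. NG)) (PiM UNIV (\<lambda>_. NG)) (rotf Q) = PiM UNIV (\<lambda>_. NG)"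
proof -
  let ?W = "PiM UNIV (\<lambda>_::'d wo. NG)" and ?D = "PiM UNIV (\<lambda>_::'d. NG)"
  have m[measurable]: "(\<lambda>\<omega> n. \<omega> (Abs_wo n)) \<in> ?W \<rightarrow>\<^sub>M ?D"
    by (rule measurable_PiM_single') (auto simp: space_PiM)
  have "distr ?D ?D (rotf Q) = distr (distr ?W ?D (\<lambda>\<omega> n. \<omega> (Abs_wo n))) ?D (rotf Q)"
    by (simp add: reindex_wo)
  also have "\<dots> = distr ?W ?D (\<lambda>\<omega>. rotf Q (\<lambda>n. \<omega> (Abs_wo n)))"
    by (subst distr_distr) (auto simp: comp_def)
  also have "\<dots> = distr ?W ?D (\<lambda>\<omega>. (\<lambda>n. rotf (Qwo Q) \<omega> (Abs_wo n)))"
    by (simp add: rotf_wo)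
  also have "\<dots> = distr (distr ?W ?W (rotf (Qwo Q))) ?D (\<lambda>\<omega> n. \<omega> (Abs_wo n))"
    by (subst distr_distr) (auto simp: comp_def)
  also have "\<dots> = ?D"
    by (simp add: gauss_orth_wo[OF Qwo_orth[OF Q]] reindex_wo)
  finally show ?thesis .
qed

definition unc :: "nat set \<Rightarrow> (nat \<Rightarrow> 'd \<Rightarrow> real) \<Rightarrow> (nat \<times> 'd) \<Rightarrow> real" where
  "unc I \<omega> = (\<lambda>p. if fst p \<in> I then \<omega> (fst p) (snd p) else undefined)"

lemma unc_meas[measurable]:
  "unc I \<in> PiM I (\<lambda>_. PiM UNIV (\<lambda>_::'d::finite. NG)) \<rightarrow>\<^sub>M PiM (I \<times> UNIV) (\<lambda>_. NG)"
proof (rule measurable_PiM_single')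
  fix p :: "nat \<times> 'd" assume p: "p \<in> I \<times> UNIV"
  then have "(\<lambda>\<omega>. unc I \<omega> p) = (\<lambda>\<omega>. \<omega> (fst p) (snd p))" by (auto simp: unc_def)
  moreover have "(\<lambda>\<omega>. \<omega> (fst p) (snd p)) \<in> PiM I (\<lambda>_. PiM UNIV (\<lambda>_::'d::finite. NG)) \<rightarrow>\<^sub>M NG"
  proof (rule measurable_compose[where f="\<lambda>\<omega>. \<omega> (fst p)" and N="PiM UNIV (\<lambda>_::'d::finite. NG)"])
    show "(\<lambda>\<omega>. \<omega> (fst p)) \<in> PiM I (\<lambda>_. PiM UNIV (\<lambda>_::'d::finite. NG)) \<rightarrow>\<^sub>M PiM UNIV (\<lambda>_::'d::finite. NG)"
      using p by (intro measurable_component_singleton) auto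
    show "(\<lambda>x. x (snd p)) \<in> PiM UNIV (\<lambda>_::'d::finite. NG) \<rightarrow>\<^sub>M NG"
      by (intro measurable_component_singleton) auto
  qed
  ultimately show "(\<lambda>\<omega>. unc I \<omega> p) \<in> PiM I (\<lambda>_. PiM UNIV (\<lambda>_::'d::finite. NG)) \<rightarrow>\<^sub>M NG" by simp
next
  show "unc I \<in> space (PiM I (\<lambda>_. PiM UNIV (\<lambda>_::'d::finite. NG))) \<rightarrow> (I \<times> UNIV \<rightarrow>\<^sub>E space NG)"
    by (auto simp: unc_def space_PiM PiE_def extensional_def)
qed

lemma NG_prob: "prob_space NG" by (simp add: prob_space_normal_density)

lemma nu_prob: "prob_space (PiM UNIV (\<lambda>_::'d::finite. NG))"
  by (intro prob_space_PiM NG_prob)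

lemma unc_distr:
  assumes I: "finite I"
  shows "distr (PiM I (\<lambda>_. PiM UNIV (\<lambda>_::'d::finite. NG))) (PiM (I \<times> UNIV) (\<lambda>_. NG)) (unc I) = PiM (I \<times> UNIV) (\<lambda>_. NG)"
proof -
  interpret NG: prob_space NG by (rule NG_prob)
  interpret P: product_sigma_finite "\<lambda>_::nat \<times> 'd. NG"
    by (simp add: product_sigma_finite_def NG.sigma_finite_measure_axioms)
  interpret nu: prob_space "PiM UNIV (\<lambda>_::'d::finite. NG)" by (rule nu_prob)
  interpret P2: product_sigma_finite "\<lambda>_::nat. PiM UNIV (\<lambda>_::'d::finite. NG)"
    by (simp add: product_sigma_finite_def nu.sigma_finite_measure_axioms)
  interpret P3: product_sigma_finite "\<lambda>_::'d. NG"
    by (simp add: product_sigma_finite_def NG.sigma_finite_measure_axioms)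
  show ?thesis
  proof (rule P.PiM_eqI)
    show "finite (I \<times> (UNIV::'d set))" using I by simp
    show "sets (distr (PiM I (\<lambda>_. PiM UNIV (\<lambda>_::'d::finite. NG))) (PiM (I \<times> UNIV) (\<lambda>_. NG)) (unc I)) = sets (PiM (I \<times> UNIV) (\<lambda>_. NG))"
      by simp
    fix A :: "nat \<times> 'd \<Rightarrow> real set" assume A: "\<And>i. i \<in> I \<times> UNIV \<Longrightarrow> A i \<in> sets NG"
    have pre: "unc I -` PiE (I \<times> UNIV) A \<inter> space (PiM I (\<lambda>_. PiM UNIV (\<lambda>_::'d::finite. NG)))
        = PiE I (\<lambda>i. PiE UNIV (\<lambda>j. A (i, j)))"
      by (auto simp: unc_def space_PiM PiE_def extensional_def Pi_def)
    have "emeasure (distr (PiM I (\<lambda>_. PiM UNIV (\<lambda>_::'d::finite. NG))) (PiM (I \<times> UNIV) (\<lambda>_. NG)) (unc I)) (PiE (I \<times> UNIV) A)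
       = emeasure (PiM I (\<lambda>_. PiM UNIV (\<lambda>_::'d::finite. NG))) (PiE I (\<lambda>i. PiE UNIV (\<lambda>j. A (i, j))))"
      using A by (subst emeasure_distr) (auto simp: pre intro!: sets_PiM_I_finite I)
    also have "\<dots> = (\<Prod>i\<in>I. emeasure (PiM UNIV (\<lambda>_::'d::finite. NG)) (PiE UNIV (\<lambda>j. A (i, j))))"
      using A I by (subst P2.emeasure_PiM) (auto intro!: sets_PiM_I_finite)
    also have "\<dots> = (\<Prod>i\<in>I. \<Prod>j\<in>UNIV. emeasure NG (A (i, j)))"
      using A by (intro prod.cong refl, subst P3.emeasure_PiM) auto
    also have "\<dots> = (\<Prod>p\<in>I \<times> UNIV. emeasure NG (A p))"
      by (simp add: prod.cartesian_product)
    finally show "emeasure (distr (PiM I (\<lambda>_. PiM UNIV (\<lambda>_::'d::finite. NG))) (PiM (I \<times> UNIV) (\<lambda>_. NG)) (unc I)) (PiE (I \<times> UNIV) A)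
       = (\<Prod>p\<in>I \<times> UNIV. emeasure NG (A p))" .
  qed
qed

definition Tf :: "real^'d::finite^'d \<Rightarrow> nat set \<Rightarrow> ((nat \<times> 'd) \<Rightarrow> real) \<Rightarrow> (nat \<times> 'd) \<Rightarrow> real" where
  "Tf Q I \<omega> = (\<lambda>p. if fst p \<in> I then \<Sum>l\<in>UNIV. Q $ snd p $ l * \<omega> (fst p, l) else undefined)"

lemma Tf_unc: "Tf Q I (unc I \<omega>) = unc I (compose I (rotf Q) \<omega>)"
  by (auto simp: Tf_def unc_def compose_def rotf_def fun_eq_iff)

lemma Tf_meas[measurable]: "Tf Q I \<in> PiM (I \<times> UNIV) (\<lambda>_::nat \<times> 'd::finite. NG) \<rightarrow>\<^sub>M PiM (I \<times> UNIV) (\<lambda>_. NG)"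
proof (rule measurable_PiM_single')
  fix p :: "nat \<times> 'd" assume p: "p \<in> I \<times> UNIV"
  then have fp[simp]: "fst p \<in> I" by auto
  from p have "(\<lambda>\<omega>. Tf Q I \<omega> p) = (\<lambda>\<omega>. \<Sum>l\<in>UNIV. Q $ snd p $ l * \<omega> (fst p, l))" by (auto simp: Tf_def)
  moreover have "(\<lambda>\<omega>. \<Sum>l\<in>UNIV. Q $ snd p $ l * \<omega> (fst p, l)) \<in> borel_measurable (PiM (I \<times> UNIV) (\<lambda>_::nat \<times> 'd::finite. NG))"
  proof (intro borel_measurable_sum borel_measurable_times borel_measurable_const)
    fix l :: 'd
    have "(fst p, l) \<in> I \<times> UNIV" using p by auto
    then have "(\<lambda>\<omega>. \<omega> (fst p, l)) \<in> PiM (I \<times> UNIV) (\<lambda>_::nat \<times> 'd::finite. NG) \<rightarrow>\<^sub>M NG"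
      by (rule measurable_component_singleton)
    then show "(\<lambda>\<omega>. \<omega> (fst p, l)) \<in> borel_measurable (PiM (I \<times> UNIV) (\<lambda>_::nat \<times> 'd::finite. NG))"
      by (simp only: measurable_cong_sets[OF refl sets_NG])
  qed
  ultimately show "(\<lambda>\<omega>. Tf Q I \<omega> p) \<in> PiM (I \<times> UNIV) (\<lambda>_::nat \<times> 'd::finite. NG) \<rightarrow>\<^sub>M NG"
    by (simp only: measurable_cong_sets[OF refl sets_NG])
next
  show "Tf Q I \<in> space (PiM (I \<times> UNIV) (\<lambda>_::nat \<times> 'd::finite. NG)) \<rightarrow> (I \<times> UNIV \<rightarrow>\<^sub>E space NG)"
    by (auto simp: Tf_def space_PiM PiE_def extensional_def)
qed

lemma compose_meas[measurable]:
  "compose I (rotf Q) \<in> PiM I (\<lambda>_. PiM UNIV (\<lambda>_::'d::finite. NG)) \<rightarrow>\<^sub>M PiM I (\<lambda>_. PiM UNIV (\<lambda>_::'d::finite. NG))"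
  unfolding compose_def by measurable

lemma gauss_flat_orth:
  fixes Q :: "real^'d::finite^'d"
  assumes Q: "orthogonal_matrix Q" and I: "finite I"
  shows "distr (PiM (I \<times> UNIV) (\<lambda>_::nat \<times> 'd. NG)) (PiM (I \<times> UNIV) (\<lambda>_. NG)) (Tf Q I) = PiM (I \<times> UNIV) (\<lambda>_. NG)"
proof -
  let ?P2 = "PiM I (\<lambda>_. PiM UNIV (\<lambda>_::'d::finite. NG))" and ?F = "PiM (I \<times> UNIV) (\<lambda>_::nat \<times> 'd. NG)"
  have pps: "product_prob_space (\<lambda>_::nat. PiM UNIV (\<lambda>_::'d::finite. NG))"
    by (simp add: product_prob_space_def product_prob_space_axioms_def product_sigma_finite_def
          nu_prob prob_space_imp_sigma_finite)
  have "distr ?F ?F (Tf Q I) = distr (distr ?P2 ?F (unc I)) ?F (Tf Q I)"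
    by (simp add: unc_distr[OF I])
  also have "\<dots> = distr ?P2 ?F (\<lambda>\<omega>. Tf Q I (unc I \<omega>))"
    by (subst distr_distr) (auto simp: comp_def)
  also have "\<dots> = distr ?P2 ?F (\<lambda>\<omega>. unc I (compose I (rotf Q) \<omega>))"
    by (simp add: Tf_unc)
  also have "\<dots> = distr (distr ?P2 ?P2 (compose I (rotf Q))) ?F (unc I)"
    by (subst distr_distr) (auto simp: comp_def)
  also have "distr ?P2 ?P2 (compose I (rotf Q)) = PiM I (\<lambda>i. distr (PiM UNIV (\<lambda>_::'d::finite. NG)) (PiM UNIV (\<lambda>_::'d::finite. NG)) (rotf Q))"
    by (rule distr_PiM_finite_prob_space[OF I pps pps]) simp
  also have "\<dots> = ?P2"
    by (simp add: gauss_orth[OF Q])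
  also have "distr ?P2 ?F (unc I) = ?F"
    by (rule unc_distr[OF I])
  finally show ?thesis .
qed

lemma conj_linear: "linear (\<lambda>A::real^'n::finite^'n. Q ** A ** R)"
proof (rule linearI)
  fix A B :: "real^'n^'n" and c :: real
  show "Q ** (A + B) ** R = Q ** A ** R + Q ** B ** R"
    by (simp add: vec_eq_iff matrix_matrix_mult_def sum.distrib algebra_simps sum_distrib_left sum_distrib_right)
  show "Q ** (c *\<^sub>R A) ** R = c *\<^sub>R (Q ** A ** R)"
    by (simp add: vec_eq_iff matrix_matrix_mult_def algebra_simps sum_distrib_left sum_distrib_right)
qed

lemma conj_blinear: "bounded_linear (\<lambda>A::real^'n::finite^'n. Q ** A ** R)"
  using conj_linear linear_conv_bounded_linear by blast

lemma mv_outer: "outer (Q *v a) (Q *v b) = Q ** outer a b ** transpose Q"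
  by (simp add: vec_eq_iff outer_def matrix_matrix_mult_def matrix_vector_mult_def transpose_def
      sum_distrib_left sum_distrib_right mult_ac sum_product)

lemma mpow_Suc: "mpow A (Suc k) = A ** mpow A k"
  by (simp add: mpow_def)

lemma mpow_0: "mpow A 0 = mat 1"
  by (simp add: mpow_def)

lemma orth_facts:
  assumes "orthogonal_matrix (Q::real^'n::finite^'n)"
  shows "X ** transpose Q ** Q = X" "X ** Q ** transpose Q = X"
    "transpose Q ** Q = mat 1" "Q ** transpose Q = mat 1"
  using assms by (auto simp: orthogonal_matrix_def matrix_mul_assoc[symmetric])

lemma mpow_conj:
  assumes "orthogonal_matrix (Q::real^'n::finite^'n)"
  shows "mpow (Q ** S ** transpose Q) k = Q ** mpow S k ** transpose Q"
proof (induction k)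
  case 0 then show ?case by (simp add: mpow_0 orth_facts[OF assms])
next
  case (Suc k) then show ?case by (simp add: mpow_Suc matrix_mul_assoc orth_facts[OF assms])
qed

lemma integrand_conj:
  assumes "orthogonal_matrix (Q::real^'n::finite^'n)"
  shows "(Q ** S ** transpose Q) ** outer (Q *v a) (Q *v a) ** mpow (Q ** S ** transpose Q) k
          ** outer (Q *v b) (Q *v b) ** mpow (Q ** S ** transpose Q) k'
       = Q ** (S ** outer a a ** mpow S k ** outer b b ** mpow S k') ** transpose Q"
  by (simp add: mv_outer mpow_conj[OF assms] matrix_mul_assoc orth_facts[OF assms])

lemma xvec_Tf: "i \<in> I \<Longrightarrow> xvec (Tf Q I \<omega>) i = Q *v xvec \<omega> i"
  by (simp add: vec_eq_iff xvec_def Tf_def matrix_vector_mult_def)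

lemma sc_Tf: "sample_cov n (Tf Q {..<n} \<omega>) = Q ** sample_cov n \<omega> ** transpose Q"
proof -
  have "sample_cov n (Tf Q {..<n} \<omega>) = (1 / real n) *\<^sub>R (\<Sum>i<n. Q ** outer (xvec \<omega> i) (xvec \<omega> i) ** transpose Q)"
    unfolding sample_cov_def by (simp add: xvec_Tf mv_outer)
  also have "\<dots> = Q ** sample_cov n \<omega> ** transpose Q"
    unfolding sample_cov_def
    by (simp add: linear_sum[OF conj_linear, symmetric, unfolded o_def] linear_scale[OF conj_linear])
  finally show ?thesis .
qed

lemma vec_comp_meas[measurable (raw)]:
  fixes f :: "'x \<Rightarrow> 'a::euclidean_space^'n::finite"
  assumes "f \<in> borel_measurable M"
  shows "(\<lambda>x. f x $ i) \<in> borel_measurable M"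
proof -
  have "(\<lambda>x. f x $ i) = (\<lambda>v. v $ i) \<circ> f" by auto
  moreover have "(\<lambda>v::'a^'n. v $ i) \<in> borel_measurable borel"
    by (intro borel_measurable_continuous_onI continuous_on_component continuous_on_id)
  ultimately show ?thesis using assms by (simp add: measurable_comp)
qed

lemma vec_meas_from_comp:
  fixes f :: "'x \<Rightarrow> 'a::euclidean_space^'n::finite"
  assumes "\<And>i. (\<lambda>x. f x $ i) \<in> borel_measurable M"
  shows "f \<in> borel_measurable M"
proof (subst borel_measurable_euclidean_space, intro ballI)
  fix b :: "'a^'n"
  have "(\<lambda>x. f x \<bullet> b) = (\<lambda>x. \<Sum>i\<in>UNIV. f x $ i \<bullet> b $ i)"
    by (simp add: inner_vec_def)
  moreover have "(\<lambda>x. \<Sum>i\<in>UNIV. f x $ i \<bullet> b $ i) \<in> borel_measurable M"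
    using assms by (intro borel_measurable_sum borel_measurable_inner) auto
  ultimately show "(\<lambda>x. f x \<bullet> b) \<in> borel_measurable M" by simp
qed

lemma mat_meas_from_entries:
  fixes f :: "'x \<Rightarrow> real^'n::finite^'m::finite"
  assumes "\<And>i j. (\<lambda>x. f x $ i $ j) \<in> borel_measurable M"
  shows "f \<in> borel_measurable M"
  using assms by (intro vec_meas_from_comp) auto

lemma mmul_meas[measurable (raw)]:
  fixes f :: "'x \<Rightarrow> real^'n::finite^'m::finite" and g :: "'x \<Rightarrow> real^'k::finite^'n"
  assumes "f \<in> borel_measurable M" "g \<in> borel_measurable M"
  shows "(\<lambda>x. f x ** g x) \<in> borel_measurable M"
  using assms by (intro mat_meas_from_entries) (simp add: matrix_matrix_mult_def)

lemma mpow_meas[measurable (raw)]: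
  fixes f :: "'x \<Rightarrow> real^'n::finite^'n"
  assumes "f \<in> borel_measurable M"
  shows "(\<lambda>x. mpow (f x) k) \<in> borel_measurable M"
  by (induction k) (simp_all add: mpow_0 mpow_Suc mmul_meas assms)

lemma comp_meas:
  assumes "i \<in> {..<n}"
  shows "(\<lambda>\<omega>::nat \<times> 'd::finite \<Rightarrow> real. \<omega> (i, j)) \<in> borel_measurable (gauss_sample n)"
proof -
  have "(i, j) \<in> {..<n} \<times> (UNIV :: 'd set)" using assms by auto
  then have "(\<lambda>\<omega>. \<omega> (i, j)) \<in> PiM ({..<n} \<times> UNIV) (\<lambda>_::nat \<times> 'd. NG) \<rightarrow>\<^sub>M NG"
    by (rule measurable_component_singleton)
  then show ?thesis
    unfolding gauss_sample_def by (simp only: measurable_cong_sets[OF refl sets_NG])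
qed

lemma sc_meas[measurable]:
  "(\<lambda>\<omega>. sample_cov n \<omega> :: real^'d::finite^'d) \<in> borel_measurable (gauss_sample n)"
proof (intro mat_meas_from_entries)
  fix a b :: 'd
  have "(\<lambda>\<omega>. sample_cov n \<omega> $ a $ b) = (\<lambda>\<omega>. (1 / real n) * (\<Sum>i<n. \<omega> (i, a) * \<omega> (i, b)))"
    by (simp add: sample_cov_def outer_def xvec_def sum_component)
  moreover have "(\<lambda>\<omega>::nat \<times> 'd \<Rightarrow> real. (1 / real n) * (\<Sum>i<n. \<omega> (i, a) * \<omega> (i, b))) \<in> borel_measurable (gauss_sample n)"
    by (intro borel_measurable_times borel_measurable_const borel_measurable_sum) (auto intro: comp_meas)
  ultimately show "(\<lambda>\<omega>. sample_cov n \<omega> $ a $ b) \<in> borel_measurable (gauss_sample n)" by simp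
qed

definition Mst :: "nat \<Rightarrow> nat \<Rightarrow> nat \<Rightarrow> real^'d::finite \<Rightarrow> real^'d \<Rightarrow> real^'d^'d" where
  "Mst n k k' a b = (\<integral>\<omega>. sample_cov n \<omega> ** outer a a ** mpow (sample_cov n \<omega>) k
               ** outer b b ** mpow (sample_cov n \<omega>) k' \<partial>(gauss_sample n))"

lemma integrand_meas[measurable]:
  "(\<lambda>\<omega>. sample_cov n \<omega> ** outer a a ** mpow (sample_cov n \<omega>) k
               ** outer b b ** mpow (sample_cov n \<omega>) k' :: real^'d::finite^'d) \<in> borel_measurable (gauss_sample n)"
  by (intro mmul_meas mpow_meas sc_meas borel_measurable_const)

lemma Mst_conj:
  fixes Q :: "real^'d::finite^'d"
  assumes Q: "orthogonal_matrix Q"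
  shows "Mst n k k' (Q *v a) (Q *v b) = Q ** Mst n k k' a b ** transpose Q"
proof -
  let ?P = "gauss_sample n :: ((nat \<times> 'd) \<Rightarrow> real) measure"
  let ?F = "\<lambda>a b \<omega>. sample_cov n \<omega> ** outer a a ** mpow (sample_cov n \<omega>) k
               ** outer b b ** mpow (sample_cov n \<omega>) k'"
  have Tm: "Tf Q {..<n} \<in> ?P \<rightarrow>\<^sub>M ?P" unfolding gauss_sample_def by (rule Tf_meas)
  have inv: "distr ?P ?P (Tf Q {..<n}) = ?P"
    unfolding gauss_sample_def by (rule gauss_flat_orth[OF Q]) simp
  have "Mst n k k' (Q *v a) (Q *v b) = integral\<^sup>L (distr ?P ?P (Tf Q {..<n})) (?F (Q *v a) (Q *v b))"
    unfolding Mst_def inv ..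
  also have "\<dots> = (\<integral>\<omega>. ?F (Q *v a) (Q *v b) (Tf Q {..<n} \<omega>) \<partial>?P)"
    by (rule integral_distr[OF Tm integrand_meas])
  also have "\<dots> = (\<integral>\<omega>. Q ** ?F a b \<omega> ** transpose Q \<partial>?P)"
    by (simp add: sc_Tf integrand_conj[OF Q])
  also have "\<dots> = Q ** Mst n k k' a b ** transpose Q"
    unfolding Mst_def
  proof (rule integral_bounded_linear')
    show "bounded_linear (\<lambda>A::real^'d^'d. Q ** A ** transpose Q)" by (rule conj_blinear)
    show "bounded_linear (\<lambda>A::real^'d^'d. transpose Q ** A ** Q)" by (rule conj_blinear)
    show "\<forall>x. transpose Q ** (Q ** x ** transpose Q) ** Q = x"
      by (simp add: matrix_mul_assoc orth_facts[OF Q])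
  qed
  finally show ?thesis .
qed

definition Pm :: "('d::finite \<Rightarrow> real^'d) \<Rightarrow> ('d \<Rightarrow> 'd) \<Rightarrow> real^'d^'d" where
  "Pm u \<sigma> = (\<chi> i j. u (\<sigma> j) $ i)"

lemma Pm_axis: "Pm u \<sigma> *v axis j 1 = u (\<sigma> j)"
  by (simp add: vec_eq_iff Pm_def matrix_vector_mult_def axis_def if_distrib cong: if_cong)

lemma Pm_orth:
  assumes u: "\<forall>s t. u s \<bullet> u t = (if s = t then 1 else 0)" and inj: "inj \<sigma>"
  shows "orthogonal_matrix (Pm u \<sigma>)"
proof -
  have "transpose (Pm u \<sigma>) ** Pm u \<sigma> = mat 1"
  proof -
    { fix j k
      have "(transpose (Pm u \<sigma>) ** Pm u \<sigma>) $ j $ k = u (\<sigma> j) \<bullet> u (\<sigma> k)"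
        by (simp add: matrix_matrix_mult_def transpose_def Pm_def inner_vec_def)
      also have "\<dots> = mat 1 $ j $ k"
        using u inj by (simp add: mat_def inj_eq)
      finally have "(transpose (Pm u \<sigma>) ** Pm u \<sigma>) $ j $ k = mat 1 $ j $ k" . }
    then show ?thesis by (simp add: vec_eq_iff)
  qed
  then show ?thesis by (simp add: orthogonal_matrix)
qed

lemma signed_orthonormal:
  assumes "\<And>j. c j = 1 \<or> c j = -1" "inj \<sigma>"
  shows "\<forall>s t. (c s *\<^sub>R axis (\<sigma> s) (1::real)) \<bullet> (c t *\<^sub>R axis (\<sigma> t) 1) = (if s = t then 1 else 0)"
proof (intro allI)
  fix s t
  show "(c s *\<^sub>R axis (\<sigma> s) (1::real)) \<bullet> (c t *\<^sub>R axis (\<sigma> t) 1) = (if s = t then 1 else 0)"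
    using assms(1)[of s] assms(1)[of t] assms(2)
    by (auto simp: inner_axis_axis inj_eq)
qed

lemma signed_conj_entry:
  assumes inj: "inj \<sigma>"
  shows "(Pm (\<lambda>j. c j *\<^sub>R axis (\<sigma> j) (1::real)) id ** M ** transpose (Pm (\<lambda>j. c j *\<^sub>R axis (\<sigma> j) (1::real)) id)) $ \<sigma> a $ \<sigma> b
     = c a * c b * M $ a $ b"
proof -
  let ?P = "Pm (\<lambda>j. c j *\<^sub>R axis (\<sigma> j) (1::real)) id"
  have P: "?P $ x $ y = (if x = \<sigma> y then c y else 0)" for x y
    by (simp add: Pm_def axis_def)
  have "(?P ** M ** transpose ?P) $ \<sigma> a $ \<sigma> b = (\<Sum>c'\<in>UNIV. (\<Sum>d\<in>UNIV. ?P $ \<sigma> a $ d * M $ d $ c') * ?P $ \<sigma> b $ c')"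
    by (simp add: matrix_matrix_mult_def transpose_def)
  also have "\<dots> = (\<Sum>c'\<in>UNIV. (c a * M $ a $ c') * (if c' = b then c b else 0))"
  proof (rule sum.cong[OF refl])
    fix c' :: 'a
    have "(\<Sum>d\<in>UNIV. ?P $ \<sigma> a $ d * M $ d $ c') = (\<Sum>d\<in>UNIV. if d = a then c d * M $ d $ c' else 0)"
      by (rule sum.cong[OF refl]) (auto simp: P inj_eq[OF inj])
    also have "\<dots> = c a * M $ a $ c'" by simp
    finally show "(\<Sum>d\<in>UNIV. ?P $ \<sigma> a $ d * M $ d $ c') * ?P $ \<sigma> b $ c' = (c a * M $ a $ c') * (if c' = b then c b else 0)"
      by (simp add: P inj_eq[OF inj] eq_commute[of b])
  qed
  also have "\<dots> = c a * c b * M $ a $ b"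
    by (simp add: if_distrib[of "\<lambda>x. _ * x"] cong: if_cong)
  finally show ?thesis .
qed

lemma outer_scale: "c * c = 1 \<Longrightarrow> outer (c *\<^sub>R a) (c *\<^sub>R a) = outer a a"
  by (simp add: vec_eq_iff outer_def algebra_simps)

lemma Mst_sign:
  assumes "c * c = 1" "d * d = 1"
  shows "Mst n k k' (c *\<^sub>R a) (d *\<^sub>R b) = Mst n k k' a b"
  by (simp add: Mst_def outer_scale[OF assms(1)] outer_scale[OF assms(2)])

definition sw :: "'a \<Rightarrow> 'a \<Rightarrow> 'a \<Rightarrow> 'a" where
  "sw a b x = (if x = a then b else if x = b then a else x)"

lemma sw_inj: "inj (sw a b)"
  by (auto simp: inj_def sw_def split: if_splits)

definition gam :: "real^'d::finite^'d \<Rightarrow> 'd \<Rightarrow> 'd \<Rightarrow> real" where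
  "gam M p q = (if \<exists>r. r \<noteq> p \<and> r \<noteq> q then M $ (SOME r. r \<noteq> p \<and> r \<noteq> q) $ (SOME r. r \<noteq> p \<and> r \<noteq> q) else 0)"

lemma M0_offdiag:
  fixes p q x y :: "'d::finite"
  assumes "x \<noteq> y"
  shows "Mst n k k' (axis p 1) (axis q 1) $ x $ y = (0::real)"
proof -
  let ?M = "Mst n k k' (axis p (1::real)) (axis q 1) :: real^'d^'d"
  define c where "c j = (if j = x then -1 else (1::real))" for j :: 'd
  let ?u = "\<lambda>j. c j *\<^sub>R axis j (1::real)"
  let ?P = "Pm ?u id"
  have c: "\<And>j. c j = 1 \<or> c j = -1" "\<And>j. c j * c j = 1" by (auto simp: c_def)
  have on: "\<forall>s t. ?u s \<bullet> ?u t = (if s = t then 1 else 0)"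
    using c(2) by (auto simp: inner_axis_axis)
  have orth: "orthogonal_matrix ?P"
    by (rule Pm_orth[OF on inj_on_id])
  have "?P ** ?M ** transpose ?P = Mst n k k' (?P *v axis p 1) (?P *v axis q 1)"
    by (rule Mst_conj[OF orth, symmetric])
  also have "\<dots> = ?M"
    by (simp add: Pm_axis Mst_sign c(2))
  finally have eq: "?P ** ?M ** transpose ?P = ?M" .
  have "(?P ** ?M ** transpose ?P) $ x $ y = c x * c y * ?M $ x $ y"
    using signed_conj_entry[OF inj_on_id, where c=c and M="?M" and a=x and b=y] by (simp only: id_apply)
  then have "?M $ x $ y = c x * c y * ?M $ x $ y"
    by (simp only: eq id_apply)
  then have "?M $ x $ y = - ?M $ x $ y"
    using assms by (simp add: c_def)
  then show ?thesis by simp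
qed

lemma M0_diag:
  fixes p q x y :: "'d::finite"
  assumes "x \<noteq> p" "x \<noteq> q" "y \<noteq> p" "y \<noteq> q"
  shows "Mst n k k' (axis p 1) (axis q 1) $ x $ x = (Mst n k k' (axis p 1) (axis q 1) $ y $ y :: real)"
proof -
  let ?M = "Mst n k k' (axis p (1::real)) (axis q 1) :: real^'d^'d"
  define c where "c j = (1::real)" for j :: 'd
  let ?s = "sw x y"
  let ?u = "\<lambda>j. c j *\<^sub>R axis (?s j) (1::real)"
  let ?P = "Pm ?u id"
  have c: "\<And>j. c j = 1 \<or> c j = -1" by (auto simp: c_def)
  have orth: "orthogonal_matrix ?P"
    by (rule Pm_orth[OF signed_orthonormal[OF c(1) sw_inj]]) auto
  have "?P ** ?M ** transpose ?P = Mst n k k' (?P *v axis p 1) (?P *v axis q 1)"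
    by (rule Mst_conj[OF orth, symmetric])
  also have "\<dots> = ?M"
    using assms by (simp add: Pm_axis c_def sw_def)
  finally have eq: "?P ** ?M ** transpose ?P = ?M" .
  have "(?P ** ?M ** transpose ?P) $ ?s y $ ?s y = c y * c y * ?M $ y $ y"
    by (rule signed_conj_entry[OF sw_inj])
  moreover have "?s y = x" by (simp add: sw_def)
  ultimately have "?M $ x $ x = c y * c y * ?M $ y $ y"
    by (simp only: eq)
  then show ?thesis by (simp add: c_def)
qed

lemma outer_axis: "outer (axis p 1) (axis p 1) $ x $ y = (if x = p \<and> y = p then 1 else (0::real))"
  by (simp add: outer_def axis_def)

lemma M0_rep:
  fixes p q :: "'d::finite" and n k k' :: nat
  defines "M \<equiv> Mst n k k' (axis p (1::real)) (axis q 1) :: real^'d^'d"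
  shows "M = (M $ p $ p - gam M p q) *\<^sub>R outer (axis p 1) (axis p 1)
           + (if q \<noteq> p then (M $ q $ q - gam M p q) *\<^sub>R outer (axis q 1) (axis q 1) else 0)
           + gam M p q *\<^sub>R mat 1"
proof -
  { fix x y :: 'd
    have "M $ x $ y = ((M $ p $ p - gam M p q) *\<^sub>R outer (axis p 1) (axis p 1)
           + (if q \<noteq> p then (M $ q $ q - gam M p q) *\<^sub>R outer (axis q 1) (axis q 1) else 0)
           + gam M p q *\<^sub>R mat 1) $ x $ y"
    proof (cases "x = y")
      case False
      have h: "outer (axis p 1) (axis p 1) $ x $ y = (0::real)" "outer (axis q 1) (axis q 1) $ x $ y = (0::real)"
          "(mat 1 :: real^'d^'d) $ x $ y = 0"
        using False by (auto simp: outer_axis mat_def)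
      show ?thesis using M0_offdiag[OF False, of n k k' p q]
        by (simp add: M_def h)
    next
      case True
      show ?thesis
      proof (cases "x = p \<or> x = q")
        case True
        show ?thesis
        proof (cases "x = p")
          case True
          then show ?thesis using \<open>x = y\<close> by (cases "q = p") (simp_all add: outer_axis mat_def)
        next
          case False
          then have "x = q" "q \<noteq> p" using \<open>x = p \<or> x = q\<close> by auto
          then show ?thesis using \<open>x = y\<close> by (simp add: outer_axis mat_def)
        qed
      next
        case False
        then have ex: "\<exists>r. r \<noteq> p \<and> r \<noteq> q" by auto
        then have r: "(SOME r. r \<noteq> p \<and> r \<noteq> q) \<noteq> p" "(SOME r. r \<noteq> p \<and> r \<noteq> q) \<noteq> q"
          using someI_ex[OF ex] by auto
        define r0 where "r0 = (SOME r. r \<noteq> p \<and> r \<noteq> q)"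
        have g: "gam M p q = M $ r0 $ r0"
          using ex unfolding gam_def r0_def by (simp only: if_True)
        have "M $ x $ x = M $ r0 $ r0"
          unfolding M_def by (rule M0_diag) (use False r in \<open>auto simp: r0_def\<close>)
        then have "M $ x $ x = gam M p q" using g by simp
        moreover have "x \<noteq> p" "x \<noteq> q" using False by auto
        ultimately show ?thesis using \<open>x = y\<close> by (simp add: outer_axis mat_def)
      qed
    qed }
  note E = this
  show ?thesis
    by (rule iffD2[OF vec_eq_iff], intro allI, rule iffD2[OF vec_eq_iff], intro allI, rule E)
qed

lemma perm_exists:
  assumes "p \<noteq> q" "s \<noteq> t"
  shows "\<exists>\<sigma>::'a \<Rightarrow> 'a. inj \<sigma> \<and> \<sigma> p = s \<and> \<sigma> q = t"
proof (intro exI conjI)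
  let ?\<sigma> = "sw p s \<circ> sw q (sw p s t)"
  show "inj ?\<sigma>" by (intro inj_compose sw_inj)
  show "?\<sigma> p = s" using assms by (auto simp: sw_def)
  show "?\<sigma> q = t" using assms by (auto simp: sw_def)
qed

lemma conj_comb:
  assumes P: "orthogonal_matrix (P::real^'d::finite^'d)"
  shows "P ** (a *\<^sub>R outer x x + b *\<^sub>R outer y y + c *\<^sub>R mat 1) ** transpose P
       = a *\<^sub>R outer (P *v x) (P *v x) + b *\<^sub>R outer (P *v y) (P *v y) + c *\<^sub>R mat 1"
  by (simp add: linear_add[OF conj_linear] linear_scale[OF conj_linear] mv_outer orth_facts[OF P])

lemma conj_comb1:
  assumes P: "orthogonal_matrix (P::real^'d::finite^'d)"
  shows "P ** (a *\<^sub>R outer x x + c *\<^sub>R mat 1) ** transpose P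
       = a *\<^sub>R outer (P *v x) (P *v x) + c *\<^sub>R mat 1"
  by (simp add: linear_add[OF conj_linear] linear_scale[OF conj_linear] mv_outer orth_facts[OF P])

theorem lemmaD7:
  fixes n k k' :: nat
  assumes "n \<ge> 1"
  shows "\<exists>\<alpha>1 \<alpha>2 \<alpha>3 \<alpha>4 \<alpha>5 :: real.
    \<forall>u :: 'd::finite \<Rightarrow> real^'d.
      (\<forall>s t. u s \<bullet> u t = (if s = t then 1 else 0)) \<longrightarrow>
      (\<forall>s t. s \<noteq> t \<longrightarrow>
         (\<integral>\<omega>. sample_cov n \<omega> ** outer (u s) (u s) ** mpow (sample_cov n \<omega>) k
               ** outer (u t) (u t) ** mpow (sample_cov n \<omega>) k' \<partial>(gauss_sample n))
         = \<alpha>1 *\<^sub>R outer (u s) (u s) + \<alpha>2 *\<^sub>R outer (u t) (u t) + \<alpha>3 *\<^sub>R mat 1) \<and>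
      (\<forall>s.
         (\<integral>\<omega>. sample_cov n \<omega> ** outer (u s) (u s) ** mpow (sample_cov n \<omega>) k
               ** outer (u s) (u s) ** mpow (sample_cov n \<omega>) k' \<partial>(gauss_sample n))
         = \<alpha>4 *\<^sub>R outer (u s) (u s) + \<alpha>5 *\<^sub>R mat 1)"
proof -
  define p where "p = (undefined :: 'd)"
  define q where "q = (if \<exists>q. q \<noteq> p then SOME q. q \<noteq> p else p)"
  define M1 where "M1 = (Mst n k k' (axis p 1) (axis q 1) :: real^'d^'d)"
  define M2 where "M2 = (Mst n k k' (axis p 1) (axis p 1) :: real^'d^'d)"
  show ?thesis
  proof (intro exI allI impI conjI)
    fix u :: "'d \<Rightarrow> real^'d"
    assume u: "\<forall>s t. u s \<bullet> u t = (if s = t then 1 else 0)"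
    {
      fix s t :: 'd assume st: "s \<noteq> t"
      have ex: "\<exists>q. q \<noteq> p" using st by metis
      then have qp: "q \<noteq> p" unfolding q_def using someI_ex[OF ex] by simp
      obtain \<sigma> where \<sigma>: "inj \<sigma>" "\<sigma> p = s" "\<sigma> q = t"
        using perm_exists[OF qp[symmetric] st] by blast
      let ?P = "Pm u \<sigma>"
      have P: "orthogonal_matrix ?P" by (rule Pm_orth[OF u \<sigma>(1)])
      have "(\<integral>\<omega>. sample_cov n \<omega> ** outer (u s) (u s) ** mpow (sample_cov n \<omega>) k
               ** outer (u t) (u t) ** mpow (sample_cov n \<omega>) k' \<partial>(gauss_sample n))
          = Mst n k k' (?P *v axis p 1) (?P *v axis q 1)"
        by (simp add: Mst_def Pm_axis \<sigma>)
      also have "\<dots> = ?P ** M1 ** transpose ?P"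
        unfolding M1_def by (rule Mst_conj[OF P])
      also have "\<dots> = ?P ** ((M1 $ p $ p - gam M1 p q) *\<^sub>R outer (axis p 1) (axis p 1)
           + (M1 $ q $ q - gam M1 p q) *\<^sub>R outer (axis q 1) (axis q 1) + gam M1 p q *\<^sub>R mat 1) ** transpose ?P"
        using M0_rep[of n k k' p q] qp unfolding M1_def[symmetric] by simp
      also have "\<dots> = (M1 $ p $ p - gam M1 p q) *\<^sub>R outer (u s) (u s)
           + (M1 $ q $ q - gam M1 p q) *\<^sub>R outer (u t) (u t) + gam M1 p q *\<^sub>R mat 1"
        by (simp add: conj_comb[OF P] Pm_axis \<sigma>)
      finally show "(\<integral>\<omega>. sample_cov n \<omega> ** outer (u s) (u s) ** mpow (sample_cov n \<omega>) k
               ** outer (u t) (u t) ** mpow (sample_cov n \<omega>) k' \<partial>(gauss_sample n))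
         = (M1 $ p $ p - gam M1 p q) *\<^sub>R outer (u s) (u s)
           + (M1 $ q $ q - gam M1 p q) *\<^sub>R outer (u t) (u t) + gam M1 p q *\<^sub>R mat 1" .
    }
    {
      fix s :: 'd
      let ?\<sigma> = "sw p s"
      have \<sigma>: "inj ?\<sigma>" "?\<sigma> p = s" by (auto simp: sw_inj sw_def)
      let ?P = "Pm u ?\<sigma>"
      have P: "orthogonal_matrix ?P" by (rule Pm_orth[OF u \<sigma>(1)])
      have "(\<integral>\<omega>. sample_cov n \<omega> ** outer (u s) (u s) ** mpow (sample_cov n \<omega>) k
               ** outer (u s) (u s) ** mpow (sample_cov n \<omega>) k' \<partial>(gauss_sample n))
          = Mst n k k' (?P *v axis p 1) (?P *v axis p 1)"
        by (simp add: Mst_def Pm_axis \<sigma>)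
      also have "\<dots> = ?P ** M2 ** transpose ?P"
        unfolding M2_def by (rule Mst_conj[OF P])
      also have "\<dots> = ?P ** ((M2 $ p $ p - gam M2 p p) *\<^sub>R outer (axis p 1) (axis p 1)
           + gam M2 p p *\<^sub>R mat 1) ** transpose ?P"
        using M0_rep[of n k k' p p] unfolding M2_def[symmetric] by simp
      also have "\<dots> = (M2 $ p $ p - gam M2 p p) *\<^sub>R outer (u s) (u s) + gam M2 p p *\<^sub>R mat 1"
        by (simp add: conj_comb1[OF P] Pm_axis \<sigma>)
      finally show "(\<integral>\<omega>. sample_cov n \<omega> ** outer (u s) (u s) ** mpow (sample_cov n \<omega>) k
               ** outer (u s) (u s) ** mpow (sample_cov n \<omega>) k' \<partial>(gauss_sample n))
         = (M2 $ p $ p - gam M2 p p) *\<^sub>R outer (u s) (u s) + gam M2 p p *\<^sub>R mat 1" .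
    }
  qed
qed

end
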